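(* (a) For every sequence $C=(C(n):n\in\omega)$ of finite sets and every infinite $Y\subseteq\omega$, there is an infinite $X\subseteq Y$ such that $C$ admits a nice dissection over $X$. (b) Let $K$ be a compactification of a discrete space $D$, and let $D\subseteq X\subseteq K$ be such that every sequence of pairwise disjoint finite nonempty subsets of $D$ has an accumulation point in $\operatorname{CL}(X)$. Then $\operatorname{CL}(X)$ is pseudocompact.
   Context: Given a sequence $C=(C(n):n\in\omega)$ of finite sets and an infinite $X\subseteq\omega$, a nice dissection of $C$ over $X$ is a pair $(U,D)$ of sequences of sets indexed by $\omega$ such that $(U(n):n\in X)$ is increasing (i.e. $U(n)\subseteq U(m)$ for $n<m$ in $X$), the sets $D(n)$, $n\in X$, are pairwise disjoint, and for every $n\in X$, $U(n)\cap D(n)=\emptyset$ and $C(n)=U(n)\cup D(n)$. $\operatorname{CL}(X)$ is the set of nonempty closed subsets of $X$ with the Vietoris topology (generated by $A^+=\{F:F\subseteq A\}$, $A^-=\{F:F\cap A\ne\emptyset\}$, $A$ open); finite nonempty subsets of $D$ are regarded as points of $\operatorname{CL}(X)$. Pseudocompact means every continuous real-valued function is bounded. *)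

theory Defs
  imports "HOL-Analysis.Analysis"
begin

definition nice_dissection :: "(nat \<Rightarrow> 'a set) \<Rightarrow> nat set \<Rightarrow> (nat \<Rightarrow> 'a set) \<Rightarrow> (nat \<Rightarrow> 'a set) \<Rightarrow> bool" where
  "nice_dissection C X U D \<longleftrightarrow>
     (\<forall>n\<in>X. \<forall>m\<in>X. n < m \<longrightarrow> U n \<subseteq> U m) \<and>
     (\<forall>n\<in>X. \<forall>m\<in>X. n \<noteq> m \<longrightarrow> D n \<inter> D m = {}) \<and>
     (\<forall>n\<in>X. U n \<inter> D n = {} \<and> C n = U n \<union> D n)"

definition CL :: "'a topology \<Rightarrow> 'a set set" where
  "CL T = {F. F \<noteq> {} \<and> closedin T F}"

definition vupper :: "'a topology \<Rightarrow> 'a set \<Rightarrow> 'a set set" where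
  "vupper T A = {F \<in> CL T. F \<subseteq> A}"

definition vlower :: "'a topology \<Rightarrow> 'a set \<Rightarrow> 'a set set" where
  "vlower T A = {F \<in> CL T. F \<inter> A \<noteq> {}}"

definition vietoris :: "'a topology \<Rightarrow> 'a set topology" where
  "vietoris T = topology_generated_by
     ({vupper T A | A. openin T A} \<union> {vlower T A | A. openin T A})"

definition pseudocompact :: "'a topology \<Rightarrow> bool" where
  "pseudocompact T \<longleftrightarrow>
     (\<forall>f. continuous_map T euclideanreal f \<longrightarrow> bounded (f ` topspace T))"

definition seq_accumulation_point :: "'a topology \<Rightarrow> (nat \<Rightarrow> 'a) \<Rightarrow> 'a \<Rightarrow> bool" where
  "seq_accumulation_point T s p \<longleftrightarrow>
     p \<in> topspace T \<and> (\<forall>U. openin T U \<and> p \<in> U \<longrightarrow> infinite {n. s n \<in> U})"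

definition compactification_of_discrete :: "'a topology \<Rightarrow> 'a set \<Rightarrow> bool" where
  "compactification_of_discrete K D \<longleftrightarrow>
     compact_space K \<and> Hausdorff_space K \<and> D \<subseteq> topspace K \<and>
     K closure_of D = topspace K \<and> subtopology K D = discrete_topology D"

end

theory Submission
  imports Defs
begin


lemma refine_const:
  fixes C :: "nat \<Rightarrow> 'b set"
  assumes "finite F" "infinite Z"
  shows "\<exists>Z'\<subseteq>Z. infinite Z' \<and> (\<forall>x\<in>F. \<forall>m\<in>Z'. \<forall>m'\<in>Z'. (x \<in> C m) = (x \<in> C m'))"
  using assms(1)
proof (induction F rule: finite_induct)
  case empty
  then show ?case using assms(2) by blast
next
  case (insert x F)
  then obtain Z' where Z': "Z' \<subseteq> Z" "infinite Z'" "\<forall>x\<in>F. \<forall>m\<in>Z'. \<forall>m'\<in>Z'. (x \<in> C m) = (x \<in> C m')"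
    by blast
  have "Z' = {m\<in>Z'. x \<in> C m} \<union> {m\<in>Z'. x \<notin> C m}" by auto
  then have "infinite {m\<in>Z'. x \<in> C m} \<or> infinite {m\<in>Z'. x \<notin> C m}"
    using Z'(2) by (metis finite_UnI)
  then show ?case
  proof
    assume h: "infinite {m\<in>Z'. x \<in> C m}"
    show ?thesis
      by (rule exI[of _ "{m\<in>Z'. x \<in> C m}"]) (use h Z' in auto)
  next
    assume h: "infinite {m\<in>Z'. x \<notin> C m}"
    show ?thesis
      by (rule exI[of _ "{m\<in>Z'. x \<notin> C m}"]) (use h Z' in auto)
  qed
qed

definition stepZ :: "(nat \<Rightarrow> 'b set) \<Rightarrow> nat set \<Rightarrow> nat set" where
  "stepZ C Z = (SOME Z'. Z' \<subseteq> Z - {LEAST n. n \<in> Z} \<and> infinite Z' \<and>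
      (\<forall>x\<in>C (LEAST n. n \<in> Z). \<forall>m\<in>Z'. \<forall>m'\<in>Z'. (x \<in> C m) = (x \<in> C m')))"

lemma stepZ:
  fixes C :: "nat \<Rightarrow> 'b set"
  assumes "\<forall>n. finite (C n)" "infinite Z"
  shows "stepZ C Z \<subseteq> Z - {LEAST n. n \<in> Z} \<and> infinite (stepZ C Z) \<and>
      (\<forall>x\<in>C (LEAST n. n \<in> Z). \<forall>m\<in>stepZ C Z. \<forall>m'\<in>stepZ C Z. (x \<in> C m) = (x \<in> C m'))"
proof -
  have "infinite (Z - {LEAST n. n \<in> Z})" using assms(2) by simp
  from refine_const[OF _ this, of "C (LEAST n. n \<in> Z)" C] assms(1)
  obtain Z' where "Z' \<subseteq> Z - {LEAST n. n \<in> Z} \<and> infinite Z' \<and>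
      (\<forall>x\<in>C (LEAST n. n \<in> Z). \<forall>m\<in>Z'. \<forall>m'\<in>Z'. (x \<in> C m) = (x \<in> C m'))" by blast
  then show ?thesis unfolding stepZ_def by (rule someI)
qed

lemma part_a_X:
  fixes C :: "nat \<Rightarrow> 'b set"
  assumes "\<forall>n. finite (C n)" "infinite Y"
  shows "\<exists>X\<subseteq>Y. infinite X \<and> (\<forall>n\<in>X. \<forall>x\<in>C n. \<forall>m\<in>X. \<forall>m'\<in>X. n < m \<and> n < m' \<longrightarrow> ((x \<in> C m) = (x \<in> C m')))"
proof -
  define Zs where "Zs k = (stepZ C ^^ k) Y" for k
  define nn where "nn k = (LEAST n. n \<in> Zs k)" for k
  have inf: "infinite (Zs k)" for k
    by (induction k) (auto simp: Zs_def assms stepZ)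
  have Suc: "Zs (Suc k) = stepZ C (Zs k)" for k by (simp add: Zs_def)
  have st: "Zs (Suc k) \<subseteq> Zs k - {nn k} \<and>
      (\<forall>x\<in>C (nn k). \<forall>m\<in>Zs (Suc k). \<forall>m'\<in>Zs (Suc k). (x \<in> C m) = (x \<in> C m'))" for k
    unfolding Suc nn_def using stepZ[OF assms(1) inf[of k]] by blast
  have mono: "Zs j \<subseteq> Zs k" if "k \<le> j" for j k
    using that
  proof (induction j rule: dec_induct)
    case base then show ?case by simp
  next
    case (step j) then show ?case using st[of j] by blast
  qed
  have nnin: "nn k \<in> Zs k" for k
  proof -
    obtain a where "a \<in> Zs k" using inf[of k] by (metis finite.emptyI ex_in_conv)
    then show ?thesis unfolding nn_def by (rule LeastI)
  qed
  have later: "nn j \<in> Zs (Suc k)" if "k < j" for j k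
    using mono[of "Suc k" j] that nnin[of j] by auto
  have smono: "strict_mono nn"
  proof (rule strict_monoI)
    fix k j :: nat assume "k < j"
    then have "nn j \<in> Zs (Suc k)" by (rule later)
    then have "nn j \<in> Zs k" "nn j \<noteq> nn k" using st[of k] by auto
    moreover have "nn k \<le> nn j" using \<open>nn j \<in> Zs k\<close> unfolding nn_def[of k] by (rule Least_le)
    ultimately show "nn k < nn j" by simp
  qed
  show ?thesis
  proof (intro exI[of _ "range nn"] conjI ballI impI)
    show "range nn \<subseteq> Y" using nnin mono[of 0] by (auto simp: Zs_def)
    show "infinite (range nn)" using smono strict_mono_imp_inj_on range_inj_infinite by blast
  next
    fix n x m m' assume h: "n \<in> range nn" "x \<in> C n" "m \<in> range nn" "m' \<in> range nn" "n < m \<and> n < m'"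
    then obtain k j j' where k: "n = nn k" "m = nn j" "m' = nn j'" by auto
    have "k < j" "k < j'" using h(5) k smono by (metis not_less_iff_gr_or_eq strict_mono_less)+
    then show "(x \<in> C m) = (x \<in> C m')" using st[of k] later h(2) k by blast
  qed
qed

lemma part_a:
  fixes C :: "nat \<Rightarrow> 'b set"
  assumes "\<forall>n. finite (C n)" "infinite Y"
  shows "\<exists>X. X \<subseteq> Y \<and> infinite X \<and> (\<exists>U D. nice_dissection C X U D)"
proof -
  obtain X where X: "X \<subseteq> Y" "infinite X"
    "\<forall>n\<in>X. \<forall>x\<in>C n. \<forall>m\<in>X. \<forall>m'\<in>X. n < m \<and> n < m' \<longrightarrow> ((x \<in> C m) = (x \<in> C m'))"
    using part_a_X[OF assms] by blast
  define U where "U n = C n \<inter> {x. \<forall>m\<in>X. n < m \<longrightarrow> x \<in> C m}" for n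
  define Dd where "Dd n = C n - U n" for n
  have "nice_dissection C X U Dd"
    unfolding nice_dissection_def
  proof (intro conjI ballI impI)
    fix n m assume "n \<in> X" "m \<in> X" "n < m"
    then show "U n \<subseteq> U m" unfolding U_def by auto
  next
    fix n m assume nm: "n \<in> X" "m \<in> X" "n \<noteq> m"
    show "Dd n \<inter> Dd m = {}"
    proof (rule ccontr)
      assume "Dd n \<inter> Dd m \<noteq> {}"
      then obtain x where x: "x \<in> Dd n" "x \<in> Dd m" by auto
      show False
      proof (cases "n < m")
        case True
        from x(1) obtain m' where "m' \<in> X" "n < m'" "x \<notin> C m'" "x \<in> C n"
          unfolding Dd_def U_def by auto
        moreover have "x \<in> C m" using x(2) unfolding Dd_def by auto
        ultimately show False using X(3) nm True by blast
      next
        case False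
        then have "m < n" using nm by simp
        from x(2) obtain m' where "m' \<in> X" "m < m'" "x \<notin> C m'" "x \<in> C m"
          unfolding Dd_def U_def by auto
        moreover have "x \<in> C n" using x(1) unfolding Dd_def by auto
        ultimately show False using X(3) nm \<open>m < n\<close> by blast
      qed
    qed
  next
    fix n assume "n \<in> X"
    show "U n \<inter> Dd n = {}" "C n = U n \<union> Dd n" unfolding Dd_def U_def by auto
  qed
  then show ?thesis using X by blast
qed

definition Basic :: "'a topology \<Rightarrow> 'a set set \<Rightarrow> 'a set set \<Rightarrow> 'a set set" where
  "Basic T AA BB = {F \<in> CL T. (\<forall>A\<in>AA. F \<subseteq> A) \<and> (\<forall>B\<in>BB. F \<inter> B \<noteq> {})}"

lemma topspace_vietoris: "topspace (vietoris T) = CL T"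
proof -
  have "vupper T (topspace T) = CL T"
    unfolding vupper_def CL_def using closedin_subset by auto
  then show ?thesis
    unfolding vietoris_def topology_generated_by_topspace
    by (auto simp: vupper_def vlower_def)
qed
lemma vietoris_base:
  assumes "openin (vietoris T) W" "G \<in> W"
  shows "\<exists>AA BB. finite AA \<and> finite BB \<and> (\<forall>A\<in>AA. openin T A) \<and> (\<forall>B\<in>BB. openin T B) \<and>
     G \<in> Basic T AA BB \<and> Basic T AA BB \<subseteq> W"
proof -
  have "generate_topology_on ({vupper T A | A. openin T A} \<union> {vlower T A | A. openin T A}) W"
    using assms(1) unfolding vietoris_def by (rule openin_topology_generated_by)
  then show ?thesis using assms(2)
  proof (induction arbitrary: G)
    case Empty then show ?case by simp
  next
    case (Int a b)
    from Int.prems have "G \<in> a" "G \<in> b" by auto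
    from Int.IH(1)[OF this(1)] obtain AA BB where
      h: "finite AA \<and> finite BB \<and> (\<forall>A\<in>AA. openin T A) \<and> (\<forall>B\<in>BB. openin T B) \<and>
     G \<in> Basic T AA BB \<and> Basic T AA BB \<subseteq> a" by blast
    from Int.IH(2)[OF \<open>G \<in> b\<close>] obtain AA' BB' where
      h': "finite AA' \<and> finite BB' \<and> (\<forall>A\<in>AA'. openin T A) \<and> (\<forall>B\<in>BB'. openin T B) \<and>
     G \<in> Basic T AA' BB' \<and> Basic T AA' BB' \<subseteq> b" by blast
    have e: "Basic T (AA \<union> AA') (BB \<union> BB') = Basic T AA BB \<inter> Basic T AA' BB'"
      unfolding Basic_def by blast
    have "finite (AA \<union> AA')" "finite (BB \<union> BB')" "\<forall>A\<in>AA \<union> AA'. openin T A" "\<forall>B\<in>BB \<union> BB'. openin T B"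
      using h h' by auto
    moreover have "G \<in> Basic T (AA \<union> AA') (BB \<union> BB')" "Basic T (AA \<union> AA') (BB \<union> BB') \<subseteq> a \<inter> b"
      unfolding e using h h' by auto
    ultimately show ?case by blast
  next
    case (UN K)
    then obtain k where "k \<in> K" "G \<in> k" by auto
    from UN.IH[OF this] obtain AA BB where h: "finite AA \<and> finite BB \<and> (\<forall>A\<in>AA. openin T A) \<and> (\<forall>B\<in>BB. openin T B) \<and>
     G \<in> Basic T AA BB \<and> Basic T AA BB \<subseteq> k" by blast
    have "Basic T AA BB \<subseteq> \<Union>K" using h \<open>k \<in> K\<close> by blast
    with h show ?case by blast
  next
    case (Basis s)
    then show ?case
    proof (elim UnE CollectE exE conjE)
      fix A assume "s = vupper T A" "openin T A"
      then show ?case using Basis.prems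
        by (intro exI[of _ "{A}"] exI[of _ "{}"]) (auto simp: Basic_def vupper_def)
    next
      fix A assume "s = vlower T A" "openin T A"
      then show ?case using Basis.prems
        by (intro exI[of _ "{}"] exI[of _ "{A}"]) (auto simp: Basic_def vlower_def)
    qed
  qed
qed

lemma Basic_open:
  assumes "finite AA" "finite BB" "\<forall>A\<in>AA. openin T A" "\<forall>B\<in>BB. openin T B"
  shows "openin (vietoris T) (Basic T AA BB)"
proof -
  have eq: "Basic T AA BB = \<Inter>(insert (CL T) (vupper T ` AA \<union> vlower T ` BB))"
  proof (intro equalityI subsetI)
    fix x assume "x \<in> Basic T AA BB" then show "x \<in> \<Inter>(insert (CL T) (vupper T ` AA \<union> vlower T ` BB))"
      by (auto simp: Basic_def vupper_def vlower_def)
  next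
    fix x assume x: "x \<in> \<Inter>(insert (CL T) (vupper T ` AA \<union> vlower T ` BB))"
    have "x \<in> vupper T A" if "A \<in> AA" for A using x that by blast
    moreover have "x \<in> vlower T B" if "B \<in> BB" for B using x that by blast
    ultimately show "x \<in> Basic T AA BB" using x by (auto simp: Basic_def vupper_def vlower_def)
  qed
  have op: "openin (vietoris T) S" if "S \<in> insert (CL T) (vupper T ` AA \<union> vlower T ` BB)" for S
  proof -
    have "openin (vietoris T) (CL T)" by (metis openin_topspace topspace_vietoris)
    moreover have "openin (vietoris T) (vupper T A)" if "openin T A" for A
      unfolding vietoris_def by (rule topology_generated_by_Basis) (use that in blast)
    moreover have "openin (vietoris T) (vlower T A)" if "openin T A" for A
      unfolding vietoris_def by (rule topology_generated_by_Basis) (use that in blast)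
    ultimately show ?thesis using that assms(3,4) by auto
  qed
  show ?thesis unfolding eq
    by (rule openin_Inter) (use assms op in auto)
qed

lemma acc_from_Basic:
  assumes "G \<in> CL T"
    "\<And>AA BB. finite AA \<Longrightarrow> finite BB \<Longrightarrow> \<forall>A\<in>AA. openin T A \<Longrightarrow> \<forall>B\<in>BB. openin T B \<Longrightarrow>
        G \<in> Basic T AA BB \<Longrightarrow> infinite {n. s n \<in> Basic T AA BB}"
  shows "seq_accumulation_point (vietoris T) s G"
  unfolding seq_accumulation_point_def
proof (intro conjI allI impI)
  show "G \<in> topspace (vietoris T)" using assms(1) topspace_vietoris by blast
next
  fix W assume "openin (vietoris T) W \<and> G \<in> W"
  then obtain AA BB where h: "finite AA \<and> finite BB \<and> (\<forall>A\<in>AA. openin T A) \<and> (\<forall>B\<in>BB. openin T B) \<and>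
     G \<in> Basic T AA BB \<and> Basic T AA BB \<subseteq> W" using vietoris_base[of T W G] by blast
  then have "infinite {n. s n \<in> Basic T AA BB}" using assms(2) by blast
  moreover have "{n. s n \<in> Basic T AA BB} \<subseteq> {n. s n \<in> W}" using h by auto
  ultimately show "infinite {n. s n \<in> W}" using finite_subset by blast
qed



context
  fixes K :: "'a topology" and D X :: "'a set"
  assumes cpt: "compactification_of_discrete K D" and DX: "D \<subseteq> X" and XK: "X \<subseteq> topspace K"
begin

lemma tsX: "topspace (subtopology K X) = X"
  using XK by auto

lemma fin_closed:
  assumes "finite S" "S \<subseteq> X"
  shows "closedin (subtopology K X) S"
proof -
  have "Hausdorff_space K" using cpt unfolding compactification_of_discrete_def by blast
  then have "t1_space (subtopology K X)"
    using Hausdorff_imp_t1_space Hausdorff_space_subtopology by blast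
  then show ?thesis using assms tsX t1_space_closedin_finite by metis
qed

lemma fin_CL:
  assumes "finite S" "S \<subseteq> D" "S \<noteq> {}"
  shows "S \<in> CL (subtopology K X)"
  using fin_closed[of S] assms DX unfolding CL_def by auto

lemma dense_D:
  assumes "openin (subtopology K X) Wo" "Wo \<noteq> {}"
  shows "Wo \<inter> D \<noteq> {}"
proof -
  obtain Wo' where Wo': "openin K Wo'" "Wo = Wo' \<inter> X" using assms(1) openin_subtopology by metis
  obtain x where x: "x \<in> Wo" using assms(2) by auto
  have "x \<in> topspace K" using x Wo' XK by auto
  then have "x \<in> K closure_of D" using cpt unfolding compactification_of_discrete_def by blast
  then obtain y where "y \<in> D" "y \<in> Wo'" using x Wo' unfolding in_closure_of by blast
  then show ?thesis using Wo' DX by auto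
qed

lemma pick_fin:
  assumes "finite AA" "finite BB" "\<forall>A\<in>AA. openin (subtopology K X) A" "\<forall>B\<in>BB. openin (subtopology K X) B"
    "Q \<in> Basic (subtopology K X) AA BB"
  shows "\<exists>E. finite E \<and> E \<noteq> {} \<and> E \<subseteq> D \<and> E \<in> Basic (subtopology K X) AA BB"
proof -
  let ?T = "subtopology K X"
  define As where "As = \<Inter>(insert X AA)"
  have Q: "Q \<in> CL ?T" "\<forall>A\<in>AA. Q \<subseteq> A" "\<forall>B\<in>BB. Q \<inter> B \<noteq> {}"
    using assms(5) unfolding Basic_def by auto
  have QX: "Q \<subseteq> X" "Q \<noteq> {}" using Q(1) closedin_subset[of ?T Q] tsX unfolding CL_def by auto
  have QAs: "Q \<subseteq> As" using Q(2) QX unfolding As_def by auto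
  have opAs: "openin ?T As" unfolding As_def
    by (rule openin_Inter) (use assms(1,3) tsX in \<open>auto intro: openin_topspace[of ?T, simplified tsX]\<close>)
  have "\<exists>d. d \<in> D \<and> d \<in> As \<and> d \<in> B" if "B \<in> insert X BB" for B
  proof -
    have opB: "openin ?T B" using that assms(4) tsX by (metis insert_iff openin_topspace)
    have "As \<inter> B \<noteq> {}"
    proof (cases "B = X")
      case True then show ?thesis using QAs QX by auto
    next
      case False then have "B \<in> BB" using that by auto
      then have "Q \<inter> B \<noteq> {}" using Q(3) by auto
      then show ?thesis using QAs by auto
    qed
    then have "(As \<inter> B) \<inter> D \<noteq> {}" using dense_D opAs opB by blast
    then show ?thesis by blast
  qed
  then obtain d where d: "\<And>B. B \<in> insert X BB \<Longrightarrow> d B \<in> D \<and> d B \<in> As \<and> d B \<in> B" by metis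
  define E where "E = d ` insert X BB"
  have E: "finite E" "E \<noteq> {}" "E \<subseteq> D" "E \<subseteq> As" using d assms(2) unfolding E_def by auto
  have "E \<in> Basic ?T AA BB" unfolding Basic_def
  proof (intro CollectI conjI ballI)
    show "E \<in> CL ?T" using fin_CL E by blast
  next
    fix A assume "A \<in> AA" then show "E \<subseteq> A" using E(4) unfolding As_def by auto
  next
    fix B assume "B \<in> BB"
    then have "d B \<in> E \<inter> B" using d unfolding E_def by auto
    then show "E \<inter> B \<noteq> {}" by auto
  qed
  with E show ?thesis by blast
qed


lemma acc:
  assumes H: "\<forall>s :: nat \<Rightarrow> 'a set.
                (\<forall>n. finite (s n) \<and> s n \<noteq> {} \<and> s n \<subseteq> D) \<and>
                (\<forall>m n. m \<noteq> n \<longrightarrow> s m \<inter> s n = {}) \<longrightarrow>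
                (\<exists>F. seq_accumulation_point (vietoris (subtopology K X)) s F)"
    and E: "\<forall>n. finite (E n) \<and> E n \<noteq> {} \<and> E n \<subseteq> D"
  shows "\<exists>G. seq_accumulation_point (vietoris (subtopology K X)) E G"
proof -
  let ?T = "subtopology K X"
  have "\<forall>n. finite (E n)" using E by blast
  from part_a[OF this, of UNIV] obtain X' U Dd where X': "infinite X'" "nice_dissection E X' U Dd"
    by auto
  from X'(2) have incr: "\<forall>n\<in>X'. \<forall>m\<in>X'. n < m \<longrightarrow> U n \<subseteq> U m"
    and disj: "\<forall>n\<in>X'. \<forall>m\<in>X'. n \<noteq> m \<longrightarrow> Dd n \<inter> Dd m = {}"
    and dec: "\<forall>n\<in>X'. U n \<inter> Dd n = {} \<and> E n = U n \<union> Dd n"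
    unfolding nice_dissection_def by auto
  define Uu where "Uu = \<Union>(U ` X')"
  have UuD: "Uu \<subseteq> D" using dec E unfolding Uu_def by blast
  have UuX: "Uu \<subseteq> topspace ?T" using UuD DX tsX by auto
  have ev1: "\<exists>n0. \<forall>n\<in>X'. n0 \<le> n \<longrightarrow> U n \<inter> B \<noteq> {}"
    if "openin ?T B" "B \<inter> (?T closure_of Uu) \<noteq> {}" for B
  proof -
    have "B \<inter> Uu \<noteq> {}" using openin_Int_closure_of_eq_empty[OF that(1)] that(2) by blast
    then obtain n1 where n1: "n1 \<in> X'" "U n1 \<inter> B \<noteq> {}" unfolding Uu_def by auto
    show ?thesis
    proof (intro exI[of _ n1] ballI impI)
      fix n assume n: "n \<in> X'" "n1 \<le> n"
      show "U n \<inter> B \<noteq> {}"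
      proof (cases "n = n1")
        case True then show ?thesis using n1 by simp
      next
        case False then have "n1 < n" using n by simp
        then have "U n1 \<subseteq> U n" using incr n n1 by blast
        then show ?thesis using n1 by blast
      qed
    qed
  qed
  have evF: "\<exists>n0. \<forall>B\<in>BB. \<forall>n\<in>X'. n0 \<le> n \<longrightarrow> U n \<inter> B \<noteq> {}"
    if "finite BB" "\<forall>B\<in>BB. openin ?T B \<and> B \<inter> (?T closure_of Uu) \<noteq> {}" for BB
    using that
  proof (induction BB rule: finite_induct)
    case empty then show ?case by simp
  next
    case (insert x F)
    then obtain n0 where n0: "\<forall>B\<in>F. \<forall>n\<in>X'. n0 \<le> n \<longrightarrow> U n \<inter> B \<noteq> {}" by auto
    have "openin ?T x" "x \<inter> (?T closure_of Uu) \<noteq> {}" using insert.prems by auto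
    then obtain n1 where n1: "\<forall>n\<in>X'. n1 \<le> n \<longrightarrow> U n \<inter> x \<noteq> {}" using ev1 by blast
    show ?case
      by (rule exI[of _ "max n0 n1"]) (use n0 n1 in auto)
  qed
  have Uu_sub: "Uu \<subseteq> ?T closure_of Uu" using closure_of_subset[OF UuX] .
  have ECL: "E n \<in> CL ?T" for n by (rule fin_CL) (use E in auto)
  have UE: "n \<in> X' \<Longrightarrow> U n \<subseteq> Uu" for n unfolding Uu_def by blast
  have eqX: "X' = {n\<in>X'. Dd n = {}} \<union> {n\<in>X'. Dd n \<noteq> {}}" by auto
  have fU: "finite X'" if "finite {n\<in>X'. Dd n = {}}" "finite {n\<in>X'. Dd n \<noteq> {}}"
    by (subst eqX) (rule finite_UnI[OF that])
  have "infinite {n\<in>X'. Dd n = {}} \<or> infinite {n\<in>X'. Dd n \<noteq> {}}"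
    using X'(1) fU by blast
  then show ?thesis
  proof
    assume N: "infinite {n\<in>X'. Dd n = {}}"
    define G where "G = ?T closure_of Uu"
    have "{n\<in>X'. Dd n = {}} \<noteq> {}" using N by (metis finite.emptyI)
    then obtain n where n: "n \<in> X'" "Dd n = {}" by blast
    then have "E n \<subseteq> Uu" using dec UE by auto
    moreover have "E n \<noteq> {}" using E by blast
    ultimately have "G \<noteq> {}" using Uu_sub unfolding G_def by blast
    then have GCL: "G \<in> CL ?T" unfolding CL_def G_def by simp
    show ?thesis
    proof (intro exI acc_from_Basic)
      show "G \<in> CL ?T" by (rule GCL)
    next
      fix AA BB assume fin: "finite AA" "finite BB" and op: "\<forall>A\<in>AA. openin ?T A" "\<forall>B\<in>BB. openin ?T B"
        and GB: "G \<in> Basic ?T AA BB"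
      then have "\<forall>B\<in>BB. openin ?T B \<and> B \<inter> (?T closure_of Uu) \<noteq> {}"
        unfolding Basic_def G_def by blast
      then obtain n0 where n0: "\<forall>B\<in>BB. \<forall>n\<in>X'. n0 \<le> n \<longrightarrow> U n \<inter> B \<noteq> {}"
        using evF fin by blast
      have "{n\<in>X'. Dd n = {}} - {..<n0} \<subseteq> {n. E n \<in> Basic ?T AA BB}"
      proof
        fix n assume n: "n \<in> {n\<in>X'. Dd n = {}} - {..<n0}"
        then have En: "E n = U n" using dec by auto
        show "n \<in> {n. E n \<in> Basic ?T AA BB}" unfolding Basic_def
        proof (intro CollectI conjI ballI)
          show "E n \<in> CL ?T" by (rule ECL)
        next
          fix A assume "A \<in> AA"
          then have "G \<subseteq> A" using GB unfolding Basic_def by blast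
          then show "E n \<subseteq> A" using En UE[of n] n Uu_sub unfolding G_def by blast
        next
          fix B assume "B \<in> BB"
          then show "E n \<inter> B \<noteq> {}" using n0 n En by auto
        qed
      qed
      moreover have "infinite ({n\<in>X'. Dd n = {}} - {..<n0})"
        by (rule Diff_infinite_finite) (use N in auto)
      ultimately show "infinite {n. E n \<in> Basic ?T AA BB}" using finite_subset by blast
    qed
  next
    assume N: "infinite {n\<in>X'. Dd n \<noteq> {}}"
    define h where "h = enumerate {n\<in>X'. Dd n \<noteq> {}}"
    have hN: "h k \<in> X'" "Dd (h k) \<noteq> {}" for k
      using enumerate_in_set[OF N, of k] unfolding h_def by auto
    have smh: "strict_mono h" unfolding h_def using strict_mono_enumerate[OF N] .
    define s where "s k = Dd (h k)" for k
    have sE: "s k \<subseteq> E (h k)" for k using dec hN unfolding s_def by auto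
    have "(\<forall>n. finite (s n) \<and> s n \<noteq> {} \<and> s n \<subseteq> D) \<and> (\<forall>m n. m \<noteq> n \<longrightarrow> s m \<inter> s n = {})"
    proof (intro conjI allI impI)
      fix n
      show "finite (s n)" using sE[of n] E by (meson finite_subset)
      show "s n \<noteq> {}" using hN unfolding s_def by auto
      show "s n \<subseteq> D" using sE[of n] E by (meson order_trans)
    next
      fix m n :: nat assume "m \<noteq> n"
      then have "h m \<noteq> h n" using smh strict_mono_eq by blast
      moreover have "h m \<in> X'" "h n \<in> X'" using hN by auto
      ultimately show "s m \<inter> s n = {}" using disj unfolding s_def by blast
    qed
    then obtain F where F: "seq_accumulation_point (vietoris ?T) s F" using H[rule_format] by presburger
    then have FCL: "F \<in> CL ?T" unfolding seq_accumulation_point_def topspace_vietoris by blast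
    define G where "G = F \<union> ?T closure_of Uu"
    have GCL: "G \<in> CL ?T" using FCL unfolding CL_def G_def by auto
    show ?thesis
    proof (intro exI acc_from_Basic)
      show "G \<in> CL ?T" by (rule GCL)
    next
      fix AA BB assume fin: "finite AA" "finite BB" and op: "\<forall>A\<in>AA. openin ?T A" "\<forall>B\<in>BB. openin ?T B"
        and GB: "G \<in> Basic ?T AA BB"
      define BB1 where "BB1 = {B\<in>BB. F \<inter> B \<noteq> {}}"
      have fin1: "finite BB1" using fin(2) unfolding BB1_def by simp
      have FB: "F \<in> Basic ?T AA BB1"
        using GB FCL unfolding Basic_def BB1_def G_def by blast
      have "openin (vietoris ?T) (Basic ?T AA BB1)"
        by (rule Basic_open) (use fin fin1 op in \<open>auto simp: BB1_def\<close>)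
      then have K1: "infinite {k. s k \<in> Basic ?T AA BB1}"
        using F FB unfolding seq_accumulation_point_def by (meson conjI)
      have "\<forall>B\<in>BB - BB1. openin ?T B \<and> B \<inter> (?T closure_of Uu) \<noteq> {}"
      proof
        fix B assume B: "B \<in> BB - BB1"
        then have "G \<inter> B \<noteq> {}" "F \<inter> B = {}" using GB unfolding Basic_def BB1_def by auto
        then have "B \<inter> (?T closure_of Uu) \<noteq> {}" unfolding G_def by blast
        then show "openin ?T B \<and> B \<inter> (?T closure_of Uu) \<noteq> {}" using op B by blast
      qed
      then obtain n0 where n0: "\<forall>B\<in>BB - BB1. \<forall>n\<in>X'. n0 \<le> n \<longrightarrow> U n \<inter> B \<noteq> {}"
        using evF fin by blast
      have "h ` ({k. s k \<in> Basic ?T AA BB1} - {..<n0}) \<subseteq> {n. E n \<in> Basic ?T AA BB}"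
      proof
        fix n assume "n \<in> h ` ({k. s k \<in> Basic ?T AA BB1} - {..<n0})"
        then obtain k where k0: "k \<in> {k. s k \<in> Basic ?T AA BB1} - {..<n0}" "n = h k" by blast
        then have k: "n = h k" "s k \<in> Basic ?T AA BB1" "n0 \<le> k" by auto
        have "k \<le> h k" using smh seq_suble by blast
        then have hk: "n0 \<le> h k" using k by simp
        have En: "E (h k) = U (h k) \<union> s k" using dec hN unfolding s_def by auto
        show "n \<in> {n. E n \<in> Basic ?T AA BB}" unfolding Basic_def k(1)
        proof (intro CollectI conjI ballI)
          show "E (h k) \<in> CL ?T" by (rule ECL)
        next
          fix A assume A: "A \<in> AA"
          then have "G \<subseteq> A" using GB unfolding Basic_def by blast
          then have "U (h k) \<subseteq> A" using UE[OF hN(1)] Uu_sub unfolding G_def by blast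
          moreover have "s k \<subseteq> A" using k(2) A unfolding Basic_def by blast
          ultimately show "E (h k) \<subseteq> A" using En by blast
        next
          fix B assume B: "B \<in> BB"
          show "E (h k) \<inter> B \<noteq> {}"
          proof (cases "B \<in> BB1")
            case True
            then have "s k \<inter> B \<noteq> {}" using k(2) unfolding Basic_def by blast
            then show ?thesis using En by blast
          next
            case False
            then have "U (h k) \<inter> B \<noteq> {}" using n0 B hN(1) hk by blast
            then show ?thesis using En by blast
          qed
        qed
      qed
      moreover have "infinite (h ` ({k. s k \<in> Basic ?T AA BB1} - {..<n0}))"
      proof
        assume "finite (h ` ({k. s k \<in> Basic ?T AA BB1} - {..<n0}))"
        moreover have "inj_on h ({k. s k \<in> Basic ?T AA BB1} - {..<n0})"
          using strict_mono_imp_inj_on[OF smh] inj_on_subset by (metis subset_UNIV)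
        ultimately have "finite ({k. s k \<in> Basic ?T AA BB1} - {..<n0})"
          using finite_imageD by blast
        moreover have "infinite ({k. s k \<in> Basic ?T AA BB1} - {..<n0})"
          by (rule Diff_infinite_finite) (use K1 in auto)
        ultimately show False by blast
      qed
      ultimately show "infinite {n. E n \<in> Basic ?T AA BB}" using finite_subset by blast
    qed
  qed
qed


lemma pseudo:
  assumes H: "\<forall>s :: nat \<Rightarrow> 'a set.
                (\<forall>n. finite (s n) \<and> s n \<noteq> {} \<and> s n \<subseteq> D) \<and>
                (\<forall>m n. m \<noteq> n \<longrightarrow> s m \<inter> s n = {}) \<longrightarrow>
                (\<exists>F. seq_accumulation_point (vietoris (subtopology K X)) s F)"
  shows "pseudocompact (vietoris (subtopology K X))"
  unfolding pseudocompact_def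
proof (intro allI impI)
  let ?T = "subtopology K X"
  let ?V = "vietoris ?T"
  fix f assume f: "continuous_map ?V euclideanreal f"
  have opW: "openin ?V {Q \<in> topspace ?V. f Q \<in> ball c 1}" for c
  proof -
    have "openin euclideanreal (ball c 1)" by simp
    then show ?thesis using f unfolding continuous_map_def by blast
  qed
  show "bounded (f ` topspace ?V)"
  proof (rule ccontr)
    assume nb: "\<not> bounded (f ` topspace ?V)"
    have "\<exists>P\<in>topspace ?V. real k \<le> \<bar>f P\<bar>" for k :: nat
    proof (rule ccontr)
      assume "\<not> (\<exists>P\<in>topspace ?V. real k \<le> \<bar>f P\<bar>)"
      then have "\<forall>x\<in>f ` topspace ?V. \<bar>x\<bar> \<le> real k" by auto
      then have "bounded (f ` topspace ?V)" unfolding bounded_real by blast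
      with nb show False by blast
    qed
    then obtain P where P: "\<And>k. P k \<in> topspace ?V \<and> real k \<le> \<bar>f (P k)\<bar>" by metis
    have "\<exists>E. finite E \<and> E \<noteq> {} \<and> E \<subseteq> D \<and> E \<in> topspace ?V \<and> \<bar>f E - f (P k)\<bar> < 1" for k
    proof -
      have "P k \<in> {Q \<in> topspace ?V. f Q \<in> ball (f (P k)) 1}" using P by auto
      from vietoris_base[OF opW this] obtain AA BB where AB:
        "finite AA" "finite BB" "\<forall>A\<in>AA. openin ?T A" "\<forall>B\<in>BB. openin ?T B"
        "P k \<in> Basic ?T AA BB" "Basic ?T AA BB \<subseteq> {Q \<in> topspace ?V. f Q \<in> ball (f (P k)) 1}"
        by blast
      from pick_fin[OF AB(1-5)] obtain E where E: "finite E" "E \<noteq> {}" "E \<subseteq> D" "E \<in> Basic ?T AA BB"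
        by blast
      then have "E \<in> topspace ?V" "f E \<in> ball (f (P k)) 1" using AB(6) by auto
      then have "\<bar>f E - f (P k)\<bar> < 1" by (simp add: dist_real_def abs_minus_commute)
      with E \<open>E \<in> topspace ?V\<close> show ?thesis by blast
    qed
    then obtain E where E: "\<And>k. finite (E k) \<and> E k \<noteq> {} \<and> E k \<subseteq> D \<and> E k \<in> topspace ?V \<and> \<bar>f (E k) - f (P k)\<bar> < 1"
      by metis
    have "\<forall>n. finite (E n) \<and> E n \<noteq> {} \<and> E n \<subseteq> D" using E by blast
    from acc[OF H this] obtain G where G: "seq_accumulation_point ?V E G" by blast
    then have "G \<in> {Q \<in> topspace ?V. f Q \<in> ball (f G) 1}" unfolding seq_accumulation_point_def by simp
    then have inf: "infinite {k. E k \<in> {Q \<in> topspace ?V. f Q \<in> ball (f G) 1}}"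
      using G opW unfolding seq_accumulation_point_def by blast
    have "{k. E k \<in> {Q \<in> topspace ?V. f Q \<in> ball (f G) 1}} \<subseteq> {..< nat \<lceil>\<bar>f G\<bar> + 2\<rceil>}"
    proof
      fix k assume "k \<in> {k. E k \<in> {Q \<in> topspace ?V. f Q \<in> ball (f G) 1}}"
      then have "\<bar>f (E k) - f G\<bar> < 1" by (simp add: dist_real_def abs_minus_commute)
      moreover have "\<bar>f (E k) - f (P k)\<bar> < 1" "real k \<le> \<bar>f (P k)\<bar>" using E P by auto
      ultimately have "real k < \<bar>f G\<bar> + 2" by linarith
      moreover have "\<bar>f G\<bar> + 2 \<le> real_of_int \<lceil>\<bar>f G\<bar> + 2\<rceil>" by (rule le_of_int_ceiling)
      ultimately have "int k < \<lceil>\<bar>f G\<bar> + 2\<rceil>" by linarith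
      then show "k \<in> {..< nat \<lceil>\<bar>f G\<bar> + 2\<rceil>}" by simp
    qed
    with inf show False using finite_subset by blast
  qed
qed

end

theorem lemma4p4:
  shows "(\<forall>(C :: nat \<Rightarrow> 'b set) (Y :: nat set).
            (\<forall>n. finite (C n)) \<and> infinite Y \<longrightarrow>
            (\<exists>X. X \<subseteq> Y \<and> infinite X \<and> (\<exists>U D. nice_dissection C X U D)))
       \<and> (\<forall>(K :: 'a topology) (D :: 'a set) (X :: 'a set).
            compactification_of_discrete K D \<and> D \<subseteq> X \<and> X \<subseteq> topspace K \<and>
            (\<forall>s :: nat \<Rightarrow> 'a set.
                (\<forall>n. finite (s n) \<and> s n \<noteq> {} \<and> s n \<subseteq> D) \<and>
                (\<forall>m n. m \<noteq> n \<longrightarrow> s m \<inter> s n = {}) \<longrightarrow>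
                (\<exists>F. seq_accumulation_point (vietoris (subtopology K X)) s F))
            \<longrightarrow> pseudocompact (vietoris (subtopology K X)))"
proof (intro conjI allI impI)
  fix C :: "nat \<Rightarrow> 'b set" and Y :: "nat set"
  assume "(\<forall>n. finite (C n)) \<and> infinite Y"
  then show "\<exists>X. X \<subseteq> Y \<and> infinite X \<and> (\<exists>U D. nice_dissection C X U D)"
    using part_a by blast
next
  fix K :: "'a topology" and D X :: "'a set"
  assume h: "compactification_of_discrete K D \<and> D \<subseteq> X \<and> X \<subseteq> topspace K \<and>
            (\<forall>s :: nat \<Rightarrow> 'a set.
                (\<forall>n. finite (s n) \<and> s n \<noteq> {} \<and> s n \<subseteq> D) \<and>
                (\<forall>m n. m \<noteq> n \<longrightarrow> s m \<inter> s n = {}) \<longrightarrow>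
                (\<exists>F. seq_accumulation_point (vietoris (subtopology K X)) s F))"
  show "pseudocompact (vietoris (subtopology K X))"
    by (rule pseudo) (use h in auto)
qed

end
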